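(* Let $p\in[0,1]$, $\delta\in[0,1]$ and fix an integer $n_{\mathrm u}\ge1$. Then $\epsilon_s\to\epsilon_\infty$ almost surely as $s\to\infty$ for some random variable $\epsilon_\infty\in\{0,1\}$, and $$\Pr(\epsilon_\infty=0)=1-p-\Delta R(\delta,p,n_{\mathrm u}),\qquad \Delta R(\delta,p,n_{\mathrm u})=\big(1-(1-\delta)^{n_{\mathrm u}}\big)(1-p).$$
   Context: Define $T^{+}_{\delta}(\epsilon)=\epsilon^2+(1-\epsilon^2)\delta$, $T^{-}_{\delta}(\epsilon)=2\epsilon-\epsilon^2+(1-2\epsilon+\epsilon^2)\delta$, and the fault-free maps $T^{+}(\epsilon)=\epsilon^2$, $T^{-}(\epsilon)=2\epsilon-\epsilon^2$. The partially protected process $(\epsilon_s)_{s\ge0}$ is defined by $\epsilon_0=p$ and, for $s\ge1$, using independent fair coin flips: if $1\le s\le n_{\mathrm u}$, $\epsilon_s=T^{+}_{\delta}(\epsilon_{s-1})$ or $T^{-}_{\delta}(\epsilon_{s-1})$ each with probability $1/2$; if $s>n_{\mathrm u}$, $\epsilon_s=T^{+}(\epsilon_{s-1})$ or $T^{-}(\epsilon_{s-1})$ each with probability $1/2$. (This models an SC decoder in which only the first $n_{\mathrm u}$ levels are faulty with internal erasure probability $\delta$ and all remaining levels are fault-free.) *)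

theory Defs
  imports "HOL-Probability.Probability"
begin

definition Tplus_d :: "real \<Rightarrow> real \<Rightarrow> real" where
  "Tplus_d \<delta> e = e^2 + (1 - e^2) * \<delta>"

definition Tminus_d :: "real \<Rightarrow> real \<Rightarrow> real" where
  "Tminus_d \<delta> e = 2*e - e^2 + (1 - 2*e + e^2) * \<delta>"

definition Tplus :: "real \<Rightarrow> real" where
  "Tplus e = e^2"

definition Tminus :: "real \<Rightarrow> real" where
  "Tminus e = 2*e - e^2"

text \<open>Probability space of independent fair coin flips; the flip used at step s \<ge> 1
  is the (s-1)-th element of the stream (True = take the "+" map).\<close>
definition coin_space :: "bool stream measure" where
  "coin_space = stream_space (measure_pmf (bernoulli_pmf (1/2)))"

fun eps_proc :: "real \<Rightarrow> real \<Rightarrow> nat \<Rightarrow> bool stream \<Rightarrow> nat \<Rightarrow> real" where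
  "eps_proc p \<delta> nu \<omega> 0 = p"
| "eps_proc p \<delta> nu \<omega> (Suc s) =
     (let e = eps_proc p \<delta> nu \<omega> s in
      if Suc s \<le> nu then (if \<omega> !! s then Tplus_d \<delta> e else Tminus_d \<delta> e)
      else (if \<omega> !! s then Tplus e else Tminus e))"

definition DeltaR :: "real \<Rightarrow> real \<Rightarrow> nat \<Rightarrow> real" where
  "DeltaR \<delta> p nu = (1 - (1 - \<delta>)^nu) * (1 - p)"

end

theory Submission
  imports Defs
begin

definition stepf :: "real \<Rightarrow> nat \<Rightarrow> bool \<Rightarrow> real \<Rightarrow> real" where
  "stepf \<delta> nu b e = (if 1 \<le> nu then (if b then Tplus_d \<delta> e else Tminus_d \<delta> e)
                      else (if b then Tplus e else Tminus e))"

lemma eps_shift: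
  "eps_proc p \<delta> nu (b ## \<omega>) (Suc s) = eps_proc (stepf \<delta> nu b p) \<delta> (nu - 1) \<omega> s"
proof (induction s)
  case 0
  then show ?case by (simp add: stepf_def)
next
  case (Suc s)
  have *: "(Suc (Suc s) \<le> nu) = (Suc s \<le> nu - 1)" by auto
  show ?case
    apply (subst eps_proc.simps(2))
    apply (subst (2) eps_proc.simps(2))
    using Suc by (simp only: Let_def * snth.simps stream.sel)
qed

lemma step_range:
  assumes "0 \<le> e" "e \<le> 1" "0 \<le> \<delta>" "\<delta> \<le> 1"
  shows "0 \<le> stepf \<delta> nu b e \<and> stepf \<delta> nu b e \<le> 1"
proof -
  have a: "e^2 \<le> 1" "e^2 \<le> e" using assms by (auto simp: power2_eq_square mult_le_one mult_left_le)
  have b: "(1 - e)^2 \<ge> 0" "2*e - e^2 = 1 - (1-e)^2"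
    by (simp, simp add: power2_eq_square algebra_simps)
  have b3: "(1-e)^2 \<le> 1" using assms by (intro power_le_one) auto
  have c: "1 - 2*e + e^2 = (1-e)^2" by (simp add: power2_eq_square algebra_simps)
  have d1: "(1 - e^2) * \<delta> \<le> 1 - e^2" using a assms by (intro mult_left_le) auto
  have d2: "(1-e)^2 * \<delta> \<le> (1-e)^2" using b assms by (intro mult_left_le) auto
  show ?thesis using a b b3 d1 d2 assms
    unfolding stepf_def Tplus_d_def Tminus_d_def Tplus_def Tminus_def c
    by (auto intro!: mult_nonneg_nonneg)
qed

lemma eps_range:
  assumes "0 \<le> p" "p \<le> 1" "0 \<le> \<delta>" "\<delta> \<le> 1"
  shows "0 \<le> eps_proc p \<delta> nu \<omega> s \<and> eps_proc p \<delta> nu \<omega> s \<le> 1"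
proof (induction s)
  case 0 then show ?case using assms by simp
next
  case (Suc s)
  have "eps_proc p \<delta> nu \<omega> (Suc s) = stepf \<delta> (if Suc s \<le> nu then 1 else 0) (\<omega> !! s) (eps_proc p \<delta> nu \<omega> s)"
    by (simp add: stepf_def Let_def)
  then show ?case using step_range Suc assms by metis
qed

lemma eps_meas[measurable]:
  "(\<lambda>\<omega>. eps_proc p \<delta> nu \<omega> s) \<in> borel_measurable coin_space"
proof (induction s)
  case 0 then show ?case by simp
next
  case (Suc s)
  have sn: "Measurable.pred coin_space (\<lambda>\<omega>. \<omega> !! s)"
    unfolding coin_space_def
    by (rule measurable_compose[OF measurable_snth]) (simp add: measurable_cong_sets)
  show ?case
    unfolding eps_proc.simps Let_def Tplus_d_def Tminus_d_def Tplus_def Tminus_def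
    using Suc sn by measurable
qed

lemma nn_coin_split:
  assumes [measurable]: "f \<in> borel_measurable coin_space"
  shows "(\<integral>\<^sup>+\<omega>. f \<omega> \<partial>coin_space) = ennreal (1/2) * (\<integral>\<^sup>+\<omega>. f (True ## \<omega>) \<partial>coin_space)
             + ennreal (1/2) * (\<integral>\<^sup>+\<omega>. f (False ## \<omega>) \<partial>coin_space)"
proof -
  have "(\<integral>\<^sup>+\<omega>. f \<omega> \<partial>coin_space) =
     (\<integral>\<^sup>+x. (\<integral>\<^sup>+X. f (x ## X) \<partial>coin_space) \<partial>measure_pmf (bernoulli_pmf (1/2)))"
    unfolding coin_space_def
    by (rule prob_space.nn_integral_stream_space[OF prob_space_measure_pmf]) (use assms in \<open>simp add: coin_space_def\<close>)
  also have "\<dots> = (\<integral>\<^sup>+X. f (True ## X) \<partial>coin_space) * ennreal (1/2) + (\<integral>\<^sup>+X. f (False ## X) \<partial>coin_space) * ennreal (1 - 1/2)"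
    by (subst nn_integral_bernoulli_pmf) auto
  finally show ?thesis by (simp add: mult.commute)
qed

lemma ennreal_avg:
  "0 \<le> a \<Longrightarrow> 0 \<le> b \<Longrightarrow> ennreal (1/2) * ennreal a + ennreal (1/2) * ennreal b = ennreal ((a + b) / 2)"
proof -
  assume a: "0 \<le> a" and b: "0 \<le> b"
  have "ennreal ((a + b) / 2) = ennreal (1/2 * a) + ennreal (1/2 * b)"
    using a b by (subst ennreal_plus[symmetric]) (auto simp: field_simps)
  also have "\<dots> = ennreal (1/2) * ennreal a + ennreal (1/2) * ennreal b"
    using a b by (simp only: ennreal_mult)
  finally show ?thesis by simp
qed

lemma expect_one_minus:
  assumes "0 \<le> \<delta>" "\<delta> \<le> 1"
  shows "0 \<le> p \<Longrightarrow> p \<le> 1 \<Longrightarrow>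
    (\<integral>\<^sup>+\<omega>. ennreal (1 - eps_proc p \<delta> nu \<omega> s) \<partial>coin_space) = ennreal ((1-\<delta>)^(min nu s) * (1-p))"
proof (induction s arbitrary: p nu)
  case 0
  then show ?case by (simp add: prob_space.emeasure_space_1[OF prob_space.prob_space_stream_space[OF prob_space_measure_pmf]] coin_space_def)
next
  case (Suc s)
  have r: "0 \<le> stepf \<delta> nu b p \<and> stepf \<delta> nu b p \<le> 1" for b using step_range Suc.prems assms by blast
  have "(\<integral>\<^sup>+\<omega>. ennreal (1 - eps_proc p \<delta> nu \<omega> (Suc s)) \<partial>coin_space)
     = ennreal (1/2) * ennreal ((1-\<delta>)^(min (nu-1) s) * (1 - stepf \<delta> nu True p))
     + ennreal (1/2) * ennreal ((1-\<delta>)^(min (nu-1) s) * (1 - stepf \<delta> nu False p))"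
    apply (subst nn_coin_split)
     apply measurable
    apply (simp only: eps_shift)
    using r by (simp add: Suc.IH)
  also have "\<dots> = ennreal ((1-\<delta>)^(min (nu-1) s) * ((1 - stepf \<delta> nu True p) + (1 - stepf \<delta> nu False p)) / 2)"
  proof -
    have "0 \<le> (1-\<delta>)^(min (nu-1) s) * (1 - stepf \<delta> nu b p)" for b
      using r assms by (intro mult_nonneg_nonneg) auto
    then show ?thesis by (subst ennreal_avg) (auto simp: algebra_simps)
  qed
  also have "\<dots> = ennreal ((1-\<delta>)^(min nu (Suc s)) * (1-p))"
  proof (cases "nu = 0")
    case True
    have "(1-\<delta>)^(min (nu-1) s) * ((1 - stepf \<delta> nu True p) + (1 - stepf \<delta> nu False p)) / 2 = (1-\<delta>)^(min nu (Suc s)) * (1-p)"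
      using True by (simp add: stepf_def Tplus_def Tminus_def power2_eq_square field_simps)
    then show ?thesis by simp
  next
    case False
    then have m: "min nu (Suc s) = Suc (min (nu-1) s)" by auto
    have "(1-\<delta>)^(min (nu-1) s) * ((1 - stepf \<delta> nu True p) + (1 - stepf \<delta> nu False p)) / 2 = (1-\<delta>)^(min nu (Suc s)) * (1-p)"
      using False unfolding m
      by (simp add: stepf_def Tplus_d_def Tminus_d_def power2_eq_square field_simps)
    then show ?thesis by simp
  qed
  finally show ?case .
qed

definition ff :: "real \<Rightarrow> real" where "ff x = sqrt (x * (1 - x))"

lemma key_ineq:
  assumes "0 \<le> x" "x \<le> 1"
  shows "ff (Tplus x) + ff (Tminus x) \<le> sqrt 3 * ff x"
proof -
  define u where "u = x * (1 - x)"
  define a where "a = x * (1 + x)"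
  define b where "b = (2 - x) * (1 - x)"
  have u0: "0 \<le> u" "u \<le> 1/4" unfolding u_def using assms
  proof -
    have "0 \<le> (x - 1/2)^2" by simp
    then show "x * (1 - x) \<le> 1/4" 
      by (auto simp: power2_eq_square algebra_simps)
    show "0 \<le> x * (1 - x)" using assms by simp
  qed
  have a0: "0 \<le> a" "0 \<le> b" unfolding a_def b_def using assms by auto
  have e1: "Tplus x * (1 - Tplus x) = u * a" unfolding Tplus_def u_def a_def by (simp add: power2_eq_square algebra_simps)
  have e2: "Tminus x * (1 - Tminus x) = u * b" unfolding Tminus_def u_def b_def by (simp add: power2_eq_square algebra_simps)
  have ab: "a * b = u * (2 + u)" unfolding a_def b_def u_def by (simp add: algebra_simps power2_eq_square)
  have "a * b \<le> ((1 + 2*u)/2)^2" unfolding ab using u0 by (simp add: power2_eq_square field_simps)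
  then have "sqrt (a*b) \<le> sqrt (((1 + 2*u)/2)^2)" by (rule real_sqrt_le_mono)
  also have "\<dots> = (1 + 2*u)/2" using u0 by simp
  finally have sab: "sqrt a * sqrt b \<le> (1 + 2*u)/2" by (simp add: real_sqrt_mult)
  have "(sqrt a + sqrt b)^2 = a + b + 2 * (sqrt a * sqrt b)" using a0 by (simp add: power2_eq_square algebra_simps)
  also have "\<dots> \<le> 3" using sab u0 unfolding a_def b_def u_def by (simp add: algebra_simps)
  finally have "sqrt a + sqrt b \<le> sqrt 3" by (intro real_le_rsqrt)
  then have "sqrt u * (sqrt a + sqrt b) \<le> sqrt u * sqrt 3" using u0 by (intro mult_left_mono) auto
  then show ?thesis unfolding ff_def e1 e2 u_def[symmetric] by (simp add: real_sqrt_mult algebra_simps)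
qed

lemma ff_nonneg: "0 \<le> x \<Longrightarrow> x \<le> 1 \<Longrightarrow> 0 \<le> ff x"
  unfolding ff_def by simp

lemma ff_le1: "0 \<le> x \<Longrightarrow> x \<le> 1 \<Longrightarrow> ff x \<le> 1"
  unfolding ff_def by (simp add: mult_le_one)

lemma expect_ff:
  assumes "0 \<le> \<delta>" "\<delta> \<le> 1"
  shows "0 \<le> p \<Longrightarrow> p \<le> 1 \<Longrightarrow>
    (\<integral>\<^sup>+\<omega>. ennreal (ff (eps_proc p \<delta> nu \<omega> s)) \<partial>coin_space)
      \<le> ennreal ((sqrt 3 / 2)^(s - nu) * (if nu = 0 then ff p else 1))"
proof (induction s arbitrary: p nu)
  case 0
  have "(\<integral>\<^sup>+\<omega>. ennreal (ff p) \<partial>coin_space) = ennreal (ff p)"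
    by (simp add: prob_space.emeasure_space_1[OF prob_space.prob_space_stream_space[OF prob_space_measure_pmf]] coin_space_def)
  then show ?case using ff_le1[OF 0] by simp
next
  case (Suc s)
  define c where "c = sqrt 3 / 2"
  have c0: "0 \<le> c" "c \<le> 1" unfolding c_def by (auto simp: real_sqrt_le_iff[of 3 4, simplified])
  have r: "0 \<le> stepf \<delta> nu b p \<and> stepf \<delta> nu b p \<le> 1" for b using step_range Suc.prems assms by blast
  define g where "g b = c^(s - (nu - 1)) * (if nu - 1 = 0 then ff (stepf \<delta> nu b p) else 1)" for b
  have g0: "0 \<le> g b" for b unfolding g_def using c0 ff_nonneg r by auto
  have "(\<integral>\<^sup>+\<omega>. ennreal (ff (eps_proc p \<delta> nu \<omega> (Suc s))) \<partial>coin_space)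
     = ennreal (1/2) * (\<integral>\<^sup>+\<omega>. ennreal (ff (eps_proc (stepf \<delta> nu True p) \<delta> (nu - 1) \<omega> s)) \<partial>coin_space)
     + ennreal (1/2) * (\<integral>\<^sup>+\<omega>. ennreal (ff (eps_proc (stepf \<delta> nu False p) \<delta> (nu - 1) \<omega> s)) \<partial>coin_space)"
    apply (subst nn_coin_split)
     apply (unfold ff_def) [1]
     apply measurable
    apply (simp only: eps_shift)
    done
  also have "\<dots> \<le> ennreal (1/2) * ennreal (g True) + ennreal (1/2) * ennreal (g False)"
    unfolding g_def c_def using r by (intro add_mono mult_left_mono Suc.IH) auto
  also have "\<dots> = ennreal ((g True + g False) / 2)" by (rule ennreal_avg[OF g0 g0])
  also have "\<dots> \<le> ennreal (c^(Suc s - nu) * (if nu = 0 then ff p else 1))"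
  proof (rule ennreal_leI)
    show "(g True + g False) / 2 \<le> c^(Suc s - nu) * (if nu = 0 then ff p else 1)"
    proof (cases "nu = 0")
      case True
      have "g True + g False = c^s * (ff (Tplus p) + ff (Tminus p))"
        unfolding g_def using True by (simp add: stepf_def algebra_simps)
      also have "\<dots> \<le> c^s * (sqrt 3 * ff p)"
        using key_ineq[OF Suc.prems] c0 by (intro mult_left_mono) auto
      finally show ?thesis using True unfolding c_def by (simp add: field_simps)
    next
      case False
      have "g b \<le> c^(Suc s - nu)" for b
      proof -
        have e: "s - (nu - 1) = Suc s - nu" using False by auto
        show ?thesis unfolding g_def e using c0 ff_le1[of "stepf \<delta> nu b p"] r[of b]
          by (auto intro: mult_left_le)
      qed
      from add_mono[OF this this] show ?thesis using False by (simp add: mult.commute)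
    qed
  qed
  finally show ?case unfolding c_def .
qed

lemma small_side: "0 \<le> (y::real) \<Longrightarrow> y \<le> 1/2 \<Longrightarrow> y * (1 - y) < 3/16 \<Longrightarrow> y < 1/4"
proof (rule ccontr)
  assume a: "0 \<le> y" "y \<le> 1/2" "y * (1 - y) < 3/16" "\<not> y < 1/4"
  then have "0 \<le> (y - 1/4) * (3/4 - y)" by (intro mult_nonneg_nonneg) auto
  moreover have "(y - 1/4) * (3/4 - y) = y * (1 - y) - 3/16" by (simp add: field_simps)
  ultimately show False using a by linarith
qed

lemma big_side: "1/2 \<le> (y::real) \<Longrightarrow> y \<le> 1 \<Longrightarrow> y * (1 - y) < 3/16 \<Longrightarrow> y > 3/4"
proof (rule ccontr)
  assume a: "1/2 \<le> y" "y \<le> 1" "y * (1 - y) < 3/16" "\<not> y > 3/4"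
  then have "0 \<le> (y - 1/4) * (3/4 - y)" by (intro mult_nonneg_nonneg) auto
  moreover have "(y - 1/4) * (3/4 - y) = y * (1 - y) - 3/16" by (simp add: field_simps)
  ultimately show False using a by linarith
qed

lemma det_conv:
  fixes x :: "nat \<Rightarrow> real"
  assumes r: "\<And>s. 0 \<le> x s \<and> x s \<le> 1"
    and st: "\<And>s. s \<ge> N0 \<Longrightarrow> x (Suc s) = (x s)^2 \<or> x (Suc s) = 2 * x s - (x s)^2"
    and lim: "(\<lambda>s. x s * (1 - x s)) \<longlonglongrightarrow> 0"
  shows "x \<longlonglongrightarrow> 0 \<or> x \<longlonglongrightarrow> 1"
proof -
  have "eventually (\<lambda>s. x s * (1 - x s) < 3/16) sequentially"
    by (rule order_tendstoD(2)[OF lim]) simp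
  then obtain N1 where N1: "\<And>s. s \<ge> N1 \<Longrightarrow> x s * (1 - x s) < 3/16"
    by (auto simp: eventually_sequentially)
  define N where "N = max N0 N1"
  have gN: "\<And>s. s \<ge> N \<Longrightarrow> x s * (1 - x s) < 3/16" using N1 unfolding N_def by auto
  have stN: "\<And>s. s \<ge> N \<Longrightarrow> x (Suc s) = (x s)^2 \<or> x (Suc s) = 2 * x s - (x s)^2"
    using st unfolding N_def by auto
  show ?thesis
  proof (cases "x N \<le> 1/2")
    case True
    have low: "x (N + k) < 1/4" for k
    proof (induction k)
      case 0 then show ?case using small_side r[of N] gN[of N] True by auto
    next
      case (Suc k)
      have "x (N + k) * x (N + k) \<le> x (N + k) * 1" using r[of "N+k"] by (intro mult_left_mono) auto
      then have "x (Suc (N + k)) \<le> 2 * x (N + k)"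
        using stN[of "N+k"] r[of "N+k"] by (auto simp: power2_eq_square)
      then have "x (Suc (N + k)) \<le> 1/2" using Suc by simp
      then show ?case using small_side r[of "Suc (N+k)"] gN[of "Suc (N+k)"] by auto
    qed
    have ev1: "eventually (\<lambda>s. x s \<le> 4/3 * (x s * (1 - x s))) sequentially"
      unfolding eventually_sequentially
    proof (intro exI allI impI)
      fix s assume "N \<le> s"
      then obtain k where k: "s = N + k" using le_Suc_ex by blast
      have "x s * 1 \<le> x s * (4/3 * (1 - x s))" using low[of k] r[of s] unfolding k
        by (intro mult_left_mono) auto
      then show "x s \<le> 4/3 * (x s * (1 - x s))" by (simp add: algebra_simps)
    qed
    have "(\<lambda>s. 4/3 * (x s * (1 - x s))) \<longlonglongrightarrow> 4/3 * 0" by (intro tendsto_mult tendsto_const lim)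
    then have "x \<longlonglongrightarrow> 0"
      by (intro tendsto_sandwich[OF _ ev1 tendsto_const]) (use r in auto)
    then show ?thesis ..
  next
    case False
    have high: "x (N + k) > 3/4" for k
    proof (induction k)
      case 0 then show ?case using big_side r[of N] gN[of N] False by auto
    next
      case (Suc k)
      have "x (N + k) * x (N + k) \<le> x (N + k) * 1" using r[of "N+k"] by (intro mult_left_mono) auto
      then have "x (Suc (N + k)) \<ge> x (N + k) * x (N + k)"
        using stN[of "N+k"] r[of "N+k"] by (auto simp: power2_eq_square)
      moreover have "x (N + k) * x (N + k) \<ge> 3/4 * (3/4)" using Suc by (intro mult_mono) auto
      ultimately have "x (Suc (N + k)) \<ge> 1/2" by simp
      then show ?case using big_side r[of "Suc (N+k)"] gN[of "Suc (N+k)"] by auto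
    qed
    have ev1: "eventually (\<lambda>s. 1 - 4/3 * (x s * (1 - x s)) \<le> x s) sequentially"
      unfolding eventually_sequentially
    proof (intro exI allI impI)
      fix s assume "N \<le> s"
      then obtain k where k: "s = N + k" using le_Suc_ex by blast
      have "(1 - x s) * 1 \<le> (1 - x s) * (4/3 * x s)" using high[of k] r[of s] unfolding k
        by (intro mult_left_mono) auto
      then show "1 - 4/3 * (x s * (1 - x s)) \<le> x s" by (simp add: field_simps)
    qed
    have "(\<lambda>s. 1 - 4/3 * (x s * (1 - x s))) \<longlonglongrightarrow> 1 - 4/3 * 0" by (intro tendsto_intros lim)
    then have "x \<longlonglongrightarrow> 1"
      by (intro tendsto_sandwich[OF ev1 _ _ tendsto_const]) (use r in auto)
    then show ?thesis ..
  qed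
qed

lemma ae_summable:
  assumes "0 \<le> p" "p \<le> 1" "0 \<le> \<delta>" "\<delta> \<le> 1"
  shows "AE \<omega> in coin_space. summable (\<lambda>s. ff (eps_proc p \<delta> nu \<omega> s))"
proof -
  define c where "c = sqrt 3 / 2"
  have c0: "0 \<le> c" "c < 1" unfolding c_def by (auto simp: real_sqrt_less_iff[of 3 4, simplified])
  have meas: "(\<lambda>\<omega>. ennreal (ff (eps_proc p \<delta> nu \<omega> s))) \<in> borel_measurable coin_space" for s
    unfolding ff_def by measurable
  have sumc: "summable (\<lambda>s. c^(s - nu))"
  proof -
    have "summable (\<lambda>s. c^((s + nu) - nu))" using c0 by (simp add: summable_geometric)
    then show ?thesis by (subst summable_iff_shift[symmetric, of _ nu])
  qed
  have "(\<integral>\<^sup>+\<omega>. (\<Sum>s. ennreal (ff (eps_proc p \<delta> nu \<omega> s))) \<partial>coin_space)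
      = (\<Sum>s. \<integral>\<^sup>+\<omega>. ennreal (ff (eps_proc p \<delta> nu \<omega> s)) \<partial>coin_space)"
    by (rule nn_integral_suminf[OF meas])
  also have "\<dots> \<le> (\<Sum>s. ennreal (c^(s - nu)))"
  proof (intro suminf_le summableI)
    fix s
    have "(\<integral>\<^sup>+\<omega>. ennreal (ff (eps_proc p \<delta> nu \<omega> s)) \<partial>coin_space)
        \<le> ennreal ((sqrt 3 / 2)^(s - nu) * (if nu = 0 then ff p else 1))"
      by (rule expect_ff) (use assms in auto)
    also have "\<dots> \<le> ennreal (c^(s - nu))"
      using ff_le1[of p] assms c0 unfolding c_def by (intro ennreal_leI) (auto intro: mult_left_le)
    finally show "(\<integral>\<^sup>+\<omega>. ennreal (ff (eps_proc p \<delta> nu \<omega> s)) \<partial>coin_space) \<le> ennreal (c^(s - nu))" .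
  qed
  also have "\<dots> = ennreal (\<Sum>s. c^(s - nu))" using c0 sumc by (intro suminf_ennreal2) auto
  finally have "(\<integral>\<^sup>+\<omega>. (\<Sum>s. ennreal (ff (eps_proc p \<delta> nu \<omega> s))) \<partial>coin_space) \<noteq> \<infinity>"
    by (auto simp: top_unique)
  then have "AE \<omega> in coin_space. (\<Sum>s. ennreal (ff (eps_proc p \<delta> nu \<omega> s))) \<noteq> \<infinity>"
    by (intro nn_integral_PInf_AE) (use meas in measurable)
  then show ?thesis
  proof (rule AE_mp, intro AE_I2 impI)
    fix \<omega> assume "(\<Sum>s. ennreal (ff (eps_proc p \<delta> nu \<omega> s))) \<noteq> \<infinity>"
    then show "summable (\<lambda>s. ff (eps_proc p \<delta> nu \<omega> s))"
      by (intro summable_suminf_not_top ff_nonneg) (use eps_range[OF assms] in auto)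
  qed
qed

theorem proposition6:
  fixes p \<delta> :: real and nu :: nat
  assumes "0 \<le> p" "p \<le> 1" "0 \<le> \<delta>" "\<delta> \<le> 1" "1 \<le> nu"
  shows "\<exists>einf :: bool stream \<Rightarrow> real.
           einf \<in> borel_measurable coin_space \<and>
           (AE \<omega> in coin_space. (\<lambda>s. eps_proc p \<delta> nu \<omega> s) \<longlonglongrightarrow> einf \<omega>) \<and>
           (AE \<omega> in coin_space. einf \<omega> \<in> {0, 1}) \<and>
           measure coin_space {\<omega> \<in> space coin_space. einf \<omega> = 0} = 1 - p - DeltaR \<delta> p nu"
proof -
  have ps: "prob_space coin_space" unfolding coin_space_def
    by (rule prob_space.prob_space_stream_space[OF prob_space_measure_pmf])
  interpret P: prob_space coin_space by (rule ps)
  have rng: "\<And>\<omega> s. 0 \<le> eps_proc p \<delta> nu \<omega> s \<and> eps_proc p \<delta> nu \<omega> s \<le> 1"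
    using eps_range assms by blast
  define einf where "einf \<omega> = real_of_ereal (limsup (\<lambda>s. ereal (eps_proc p \<delta> nu \<omega> s)))" for \<omega>
  have meas: "einf \<in> borel_measurable coin_space" unfolding einf_def by measurable
  have lim_einf: "einf \<omega> = L" if "(\<lambda>s. eps_proc p \<delta> nu \<omega> s) \<longlonglongrightarrow> L" for \<omega> L
  proof -
    have "(\<lambda>s. ereal (eps_proc p \<delta> nu \<omega> s)) \<longlonglongrightarrow> ereal L" using that by simp
    then have "limsup (\<lambda>s. ereal (eps_proc p \<delta> nu \<omega> s)) = ereal L"
      by (intro lim_imp_Limsup) auto
    then show ?thesis unfolding einf_def by simp
  qed
  have conv01: "AE \<omega> in coin_space. (\<lambda>s. eps_proc p \<delta> nu \<omega> s) \<longlonglongrightarrow> 0 \<or> (\<lambda>s. eps_proc p \<delta> nu \<omega> s) \<longlonglongrightarrow> 1"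
    using ae_summable[OF assms(1-4)]
  proof (rule AE_mp, intro AE_I2 impI)
    fix \<omega> assume sm: "summable (\<lambda>s. ff (eps_proc p \<delta> nu \<omega> s))"
    define x where "x s = eps_proc p \<delta> nu \<omega> s" for s
    have "(\<lambda>s. (ff (x s))^2) \<longlonglongrightarrow> 0^2"
      using summable_LIMSEQ_zero[OF sm] unfolding x_def by (intro tendsto_power)
    moreover have "(ff (x s))^2 = x s * (1 - x s)" for s
      unfolding ff_def using rng[of \<omega> s] unfolding x_def by simp
    ultimately have l: "(\<lambda>s. x s * (1 - x s)) \<longlonglongrightarrow> 0" by simp
    have st: "x (Suc s) = (x s)^2 \<or> x (Suc s) = 2 * x s - (x s)^2" if "s \<ge> nu" for s
      using that unfolding x_def by (simp add: Let_def Tplus_def Tminus_def)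
    have "x \<longlonglongrightarrow> 0 \<or> x \<longlonglongrightarrow> 1"
      by (rule det_conv[OF _ st l]) (use rng x_def in auto)
    then show "(\<lambda>s. eps_proc p \<delta> nu \<omega> s) \<longlonglongrightarrow> 0 \<or> (\<lambda>s. eps_proc p \<delta> nu \<omega> s) \<longlonglongrightarrow> 1"
      unfolding x_def .
  qed
  have ae_conv: "AE \<omega> in coin_space. (\<lambda>s. eps_proc p \<delta> nu \<omega> s) \<longlonglongrightarrow> einf \<omega>"
    using conv01 by eventually_elim (use lim_einf in auto)
  have ae01: "AE \<omega> in coin_space. einf \<omega> \<in> {0, 1}"
    using conv01 by eventually_elim (use lim_einf in auto)
  have int_s: "(\<integral>\<omega>. (1 - eps_proc p \<delta> nu \<omega> s) \<partial>coin_space) = (1-\<delta>)^(min nu s) * (1-p)" for s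
  proof -
    have "(\<integral>\<omega>. (1 - eps_proc p \<delta> nu \<omega> s) \<partial>coin_space)
        = enn2real (\<integral>\<^sup>+\<omega>. ennreal (1 - eps_proc p \<delta> nu \<omega> s) \<partial>coin_space)"
      by (rule integral_eq_nn_integral) (use rng in auto)
    also have "\<dots> = (1-\<delta>)^(min nu s) * (1-p)"
      using expect_one_minus[of \<delta> p nu s] assms by simp
    finally show ?thesis .
  qed
  have lim1: "(\<lambda>s. \<integral>\<omega>. (1 - eps_proc p \<delta> nu \<omega> s) \<partial>coin_space) \<longlonglongrightarrow> (\<integral>\<omega>. (1 - einf \<omega>) \<partial>coin_space)"
  proof (rule integral_dominated_convergence[where w="\<lambda>_. 1"])
    show "AE \<omega> in coin_space. (\<lambda>s. 1 - eps_proc p \<delta> nu \<omega> s) \<longlonglongrightarrow> 1 - einf \<omega>"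
      using ae_conv by eventually_elim (intro tendsto_intros)
    show "AE \<omega> in coin_space. norm (1 - eps_proc p \<delta> nu \<omega> s) \<le> 1" for s
      using rng by auto
  qed (use meas in auto)
  have lim2: "(\<lambda>s. \<integral>\<omega>. (1 - eps_proc p \<delta> nu \<omega> s) \<partial>coin_space) \<longlonglongrightarrow> (1-\<delta>)^nu * (1-p)"
  proof (rule tendsto_eventually)
    show "eventually (\<lambda>s. (\<integral>\<omega>. (1 - eps_proc p \<delta> nu \<omega> s) \<partial>coin_space) = (1-\<delta>)^nu * (1-p)) sequentially"
      unfolding eventually_sequentially int_s by (intro exI[of _ nu]) auto
  qed
  have I: "(\<integral>\<omega>. (1 - einf \<omega>) \<partial>coin_space) = (1-\<delta>)^nu * (1-p)"
    using LIMSEQ_unique[OF lim1 lim2] .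
  have "(\<integral>\<omega>. (1 - einf \<omega>) \<partial>coin_space) = (\<integral>\<omega>. indicator {\<omega> \<in> space coin_space. einf \<omega> = 0} \<omega> \<partial>coin_space)"
    by (rule integral_cong_AE) (use meas ae01 in \<open>measurable, auto simp: indicator_def\<close>)
  also have "\<dots> = measure coin_space {\<omega> \<in> space coin_space. einf \<omega> = 0}"
    by (simp add: Int_absorb2 Collect_subset[unfolded Int_def])
  finally have "measure coin_space {\<omega> \<in> space coin_space. einf \<omega> = 0} = 1 - p - DeltaR \<delta> p nu"
    using I by (simp add: DeltaR_def algebra_simps)
  then show ?thesis using meas ae_conv ae01 by blast
qed

end
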